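(* Let $b\ge1$, $k\in\mathbb{N}$, and let $A\subseteq\mathbb{N}$ with $\min(A)=0$ and $\max(A)\le k$. Let $f\in\mathcal{M}^b$ have set-array representation $(A,\emptyset,\ldots,\emptyset)$. Then $d(f)\le d([k]_b)$, and the inequality is strict for $f\neq[k]_b$.
   Context: $\mathbb{N}=\{0,1,\ldots\}$, $[k]=\{0,\ldots,k\}$. $\mathcal{M}^b$ is the set of finitely supported functions $f:\mathbb{N}\to\{0,\ldots,b\}$; its set-array representation is $(A_1,\ldots,A_b)$ with $A_i=\{a:f(a)\ge i\}$. Multiset addition is coordinatewise on set arrays: $(A_i)_i+(B_i)_i=(A_i+B_i)_i$, with $S+T=\{s+t:s\in S,t\in T\}$ and $S+\emptyset=\emptyset$. $g$ is a divisor of $f$ if $f=g+h$ for some $h\in\mathcal{M}^b$; $d(f)$ is the number of divisors of $f$. $[k]_b$ is the multiset with set-array representation $([k],\emptyset,\ldots,\emptyset)$. *)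

theory Defs
  imports Main
begin

definition Mb :: "nat \<Rightarrow> (nat \<Rightarrow> nat) set" where
  "Mb b = {f. finite {a. f a \<noteq> 0} \<and> (\<forall>a. f a \<le> b)}"

text \<open>i-th set of the set-array representation: A_i = {a. f a >= i}.\<close>
definition level :: "(nat \<Rightarrow> nat) \<Rightarrow> nat \<Rightarrow> nat set" where
  "level f i = {a. f a \<ge> i}"

definition sumset :: "nat set \<Rightarrow> nat set \<Rightarrow> nat set" where
  "sumset S T = {s + t |s t. s \<in> S \<and> t \<in> T}"

text \<open>f = g + h in M^b: coordinatewise sumset addition of set arrays.\<close>
definition ms_sum_eq :: "nat \<Rightarrow> (nat \<Rightarrow> nat) \<Rightarrow> (nat \<Rightarrow> nat) \<Rightarrow> (nat \<Rightarrow> nat) \<Rightarrow> bool" where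
  "ms_sum_eq b f g h \<longleftrightarrow> (\<forall>i\<in>{1..b}. level f i = sumset (level g i) (level h i))"

definition is_divisor :: "nat \<Rightarrow> (nat \<Rightarrow> nat) \<Rightarrow> (nat \<Rightarrow> nat) \<Rightarrow> bool" where
  "is_divisor b g f \<longleftrightarrow> g \<in> Mb b \<and> (\<exists>h\<in>Mb b. ms_sum_eq b f g h)"

definition num_divisors :: "nat \<Rightarrow> (nat \<Rightarrow> nat) \<Rightarrow> nat" where
  "num_divisors b f = card {g. is_divisor b g f}"

text \<open>[k]_b: set array ([k], {}, ..., {}), i.e. indicator of {0..k}.\<close>
definition interval_ms :: "nat \<Rightarrow> nat \<Rightarrow> nat" where
  "interval_ms k = (\<lambda>a. if a \<le> k then 1 else 0)"

end

theory Submission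
  imports Defs
begin

lemma sumset_empty2[simp]: "sumset S {} = {}"
  by (simp add: sumset_def)

lemma level_interval:
  "i \<ge> 1 \<Longrightarrow> level (interval_ms j) i = (if i = 1 then {..j} else {})"
  by (auto simp: level_def interval_ms_def)

lemma interval_Mb: "b \<ge> 1 \<Longrightarrow> interval_ms j \<in> Mb b"
  unfolding Mb_def interval_ms_def by (auto intro: finite_subset[of _ "{..j}"])

lemma level1: "level g 1 = {a. g a \<noteq> 0}"
  by (auto simp: level_def)

lemma div_first:
  assumes "is_divisor b g f" "b \<ge> 1"
  shows "g \<in> Mb b \<and> (\<exists>H. level f 1 = sumset {a. g a \<noteq> 0} H)"
proof -
  from assms obtain h where "h \<in> Mb b" "ms_sum_eq b f g h" "g \<in> Mb b"
    unfolding is_divisor_def by blast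
  then have "level f 1 = sumset (level g 1) (level h 1)"
    using assms(2) unfolding ms_sum_eq_def by auto
  then show ?thesis using \<open>g \<in> Mb b\<close> unfolding level1 by blast
qed

lemma sumset_zero:
  assumes "0 \<in> A" "A = sumset G H"
  shows "0 \<in> G" "0 \<in> H" "G \<subseteq> A"
proof -
  from assms obtain s t where "0 = s + t" "s \<in> G" "t \<in> H" unfolding sumset_def by auto
  then show "0 \<in> G" "0 \<in> H" by auto
  show "G \<subseteq> A"
  proof
    fix x assume "x \<in> G"
    then have "x + 0 \<in> sumset G H" using \<open>0 \<in> H\<close> unfolding sumset_def by blast
    then show "x \<in> A" using assms by simp
  qed
qed

lemma div_supp:
  assumes "is_divisor b g f" "b \<ge> 1" "0 \<in> level f 1" "g a \<noteq> 0"
  shows "a \<in> level f 1"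
proof -
  from div_first[OF assms(1,2)] obtain H where "level f 1 = sumset {a. g a \<noteq> 0} H" by blast
  from sumset_zero(3)[OF assms(3) this] assms(4) show ?thesis by blast
qed

lemma finite_funs: "finite {g::nat\<Rightarrow>nat. \<forall>a. g a \<le> b \<and> (k < a \<longrightarrow> g a = 0)}"
  (is "finite ?S")
proof -
  let ?m = "\<lambda>g::nat\<Rightarrow>nat. map g [0..<Suc k]"
  have inj: "inj_on ?m ?S"
  proof (rule inj_onI)
    fix g1 g2 assume "g1 \<in> ?S" "g2 \<in> ?S" "?m g1 = ?m g2"
    then have "\<forall>x\<in>set [0..<Suc k]. g1 x = g2 x" by (simp only: map_eq_conv)
    show "g1 = g2"
    proof
      fix x show "g1 x = g2 x"
      proof (cases "x \<le> k")
        case True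
        then have "x \<in> set [0..<Suc k]" by (simp only: set_upt atLeastLessThan_iff) simp
        then show ?thesis using \<open>\<forall>x\<in>set [0..<Suc k]. g1 x = g2 x\<close> by blast
      next
        case False
        then have "k < x" by simp
        then show ?thesis using \<open>g1 \<in> ?S\<close> \<open>g2 \<in> ?S\<close> by (simp del: upt_Suc)
      qed
    qed
  qed
  have sub: "?m ` ?S \<subseteq> {xs. set xs \<subseteq> {..b} \<and> length xs = Suc k}"
  proof
    fix xs assume "xs \<in> ?m ` ?S"
    then obtain g where "g \<in> ?S" "xs = ?m g" by blast
    then show "xs \<in> {xs. set xs \<subseteq> {..b} \<and> length xs = Suc k}"
      by (simp del: upt_Suc) blast
  qed
  have fin: "finite {xs. set xs \<subseteq> {..b} \<and> length xs = Suc k}"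
    by (rule finite_lists_length_eq) simp
  have "finite (?m ` ?S)" by (rule finite_subset[OF sub fin])
  then show ?thesis by (rule finite_imageD[OF _ inj])
qed

lemma finite_divk:
  assumes "b \<ge> 1"
  shows "finite {g. is_divisor b g (interval_ms k)}"
proof (rule finite_subset[OF _ finite_funs[of b k]])
  have l: "level (interval_ms k) 1 = {..k}" using level_interval[of 1 k] by simp
  show "{g. is_divisor b g (interval_ms k)} \<subseteq> {g. \<forall>a. g a \<le> b \<and> (k < a \<longrightarrow> g a = 0)}"
  proof
    fix g assume "g \<in> {g. is_divisor b g (interval_ms k)}"
    then have d: "is_divisor b g (interval_ms k)" by simp
    have "\<forall>a. g a \<le> b \<and> (k < a \<longrightarrow> g a = 0)"
    proof (intro allI conjI impI)
      fix a show "g a \<le> b" using div_first[OF d assms] by (auto simp: Mb_def)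
    next
      fix a assume "k < a"
      show "g a = 0"
      proof (rule ccontr)
        assume "g a \<noteq> 0"
        have "0 \<in> level (interval_ms k) 1" using l by simp
        from div_supp[OF d assms this \<open>g a \<noteq> 0\<close>] l \<open>k < a\<close> show False by simp
      qed
    qed
    then show "g \<in> {g. \<forall>a. g a \<le> b \<and> (k < a \<longrightarrow> g a = 0)}" by simp
  qed
qed

definition phi :: "nat set \<Rightarrow> (nat \<Rightarrow> nat) \<Rightarrow> nat \<Rightarrow> nat" where
  "phi A g a = (if g a \<noteq> 0 then g a else if a \<notin> A \<and> (\<exists>c. a \<le> c \<and> g c \<noteq> 0) then 1 else 0)"

lemma phi_div:
  assumes b: "b \<ge> 1" and Ak: "A \<subseteq> {..k}" and A0: "0 \<in> A" and g: "g \<in> Mb b"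
    and AGH: "A = sumset {a. g a \<noteq> 0} H"
  shows "is_divisor b (phi A g) (interval_ms k)"
proof -
  let ?G = "{a. g a \<noteq> 0}"
  have fin: "finite ?G" using g by (auto simp: Mb_def)
  have G0: "0 \<in> ?G" and H0: "0 \<in> H" and GA: "?G \<subseteq> A" using sumset_zero[OF A0 AGH] by auto
  define M where "M = Max ?G"
  have MG: "M \<in> ?G" unfolding M_def using fin G0 by (intro Max_in) auto
  have leM: "\<And>a. a \<in> ?G \<Longrightarrow> a \<le> M" unfolding M_def using fin by auto
  have Mk: "M \<le> k" using MG GA Ak by auto
  have Hk: "\<And>t. t \<in> H \<Longrightarrow> t \<le> k - M"
  proof -
    fix t assume "t \<in> H"
    then have "M + t \<in> A" using AGH MG unfolding sumset_def by blast
    then show "t \<le> k - M" using Ak by auto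
  qed
  have supp: "\<And>a. phi A g a \<noteq> 0 \<longleftrightarrow> (g a \<noteq> 0 \<or> (a \<notin> A \<and> a \<le> M))"
  proof -
    fix a
    have ex: "(\<exists>c. a \<le> c \<and> g c \<noteq> 0) \<longleftrightarrow> a \<le> M"
    proof
      assume "\<exists>c. a \<le> c \<and> g c \<noteq> 0"
      then obtain c where "a \<le> c" "g c \<noteq> 0" by blast
      then show "a \<le> M" using leM[of c] by simp
    next
      assume "a \<le> M" then show "\<exists>c. a \<le> c \<and> g c \<noteq> 0" using MG by blast
    qed
    show "phi A g a \<noteq> 0 \<longleftrightarrow> (g a \<noteq> 0 \<or> (a \<notin> A \<and> a \<le> M))"
      unfolding phi_def ex by simp
  qed
  have pM: "phi A g \<in> Mb b"
  proof -
    have "{a. phi A g a \<noteq> 0} \<subseteq> {..M}"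
    proof
      fix a assume "a \<in> {a. phi A g a \<noteq> 0}"
      then have "g a \<noteq> 0 \<or> a \<le> M" using supp by blast
      then show "a \<in> {..M}" using leM by auto
    qed
    moreover have "\<forall>a. phi A g a \<le> b"
    proof
      fix a have "g a \<le> b" using g unfolding Mb_def by blast
      then show "phi A g a \<le> b" unfolding phi_def using b by simp
    qed
    ultimately show ?thesis unfolding Mb_def using finite_subset[of _ "{..M}"] by blast
  qed
  have key: "{..k} = sumset (level (phi A g) 1) {..k - M}"
  proof
    show "sumset (level (phi A g) 1) {..k - M} \<subseteq> {..k}"
    proof
      fix x assume "x \<in> sumset (level (phi A g) 1) {..k - M}"
      then obtain s t where "x = s + t" "phi A g s \<noteq> 0" "t \<le> k - M"
        unfolding sumset_def level1 by auto
      then have "s \<le> M" using supp leM by auto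
      then show "x \<in> {..k}" using \<open>x = s + t\<close> \<open>t \<le> k - M\<close> Mk by auto
    qed
  next
    show "{..k} \<subseteq> sumset (level (phi A g) 1) {..k - M}"
    proof
      fix x assume xk: "x \<in> {..k}"
      show "x \<in> sumset (level (phi A g) 1) {..k - M}"
      proof (cases "x \<in> A")
        case True
        then obtain s t where "x = s + t" "g s \<noteq> 0" "t \<in> H" using AGH unfolding sumset_def by auto
        then show ?thesis using supp Hk unfolding sumset_def level1 by fastforce
      next
        case False
        show ?thesis
        proof (cases "x \<le> M")
          case True
          then have "phi A g x \<noteq> 0" using supp False by auto
          then show ?thesis unfolding sumset_def level1 by force
        next
          case c: False
          have "phi A g M \<noteq> 0" using supp MG by auto
          moreover have "x = M + (x - M)" "x - M \<le> k - M" using c xk by auto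
          ultimately show ?thesis unfolding sumset_def level1 by blast
        qed
      qed
    qed
  qed
  have "ms_sum_eq b (interval_ms k) (phi A g) (interval_ms (k - M))"
    unfolding ms_sum_eq_def
  proof
    fix i assume "i \<in> {1..b}"
    then show "level (interval_ms k) i = sumset (level (phi A g) i) (level (interval_ms (k - M)) i)"
    proof (cases "i = 1")
      case True
      then show ?thesis using key level_interval[of 1 k] level_interval[of 1 "k - M"] by simp
    next
      case False
      with \<open>i \<in> {1..b}\<close> have "i \<ge> 1" by simp
      then show ?thesis using False level_interval[of i k] level_interval[of i "k - M"] by simp
    qed
  qed
  then show ?thesis unfolding is_divisor_def by (rule conjI[OF pM bexI[OF _ interval_Mb[OF b]]])
qed


lemma sumsetI: "s \<in> S \<Longrightarrow> t \<in> T \<Longrightarrow> a = s + t \<Longrightarrow> a \<in> sumset S T"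
  unfolding sumset_def by blast

lemma sumsetE: "a \<in> sumset S T \<Longrightarrow> (\<And>s t. s \<in> S \<Longrightarrow> t \<in> T \<Longrightarrow> a = s + t \<Longrightarrow> P) \<Longrightarrow> P"
  unfolding sumset_def by blast

lemma div_k:
  assumes b: "b \<ge> 1" and g: "g \<in> Mb b" and g1: "\<forall>a. g a \<le> 1"
    and eq: "{..k} = sumset {a. g a \<noteq> 0} {..j}"
  shows "is_divisor b g (interval_ms k)"
proof -
  have "ms_sum_eq b (interval_ms k) g (interval_ms j)"
    unfolding ms_sum_eq_def
  proof
    fix i assume i: "i \<in> {1..b}"
    show "level (interval_ms k) i = sumset (level g i) (level (interval_ms j) i)"
    proof (cases "i = 1")
      case True
      then show ?thesis using eq level_interval[of 1 k] level_interval[of 1 j] level1[of g] by simp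
    next
      case False
      with i have "i \<ge> 1" by simp
      then show ?thesis using False level_interval[of i k] level_interval[of i j] by simp
    qed
  qed
  then show ?thesis unfolding is_divisor_def by (rule conjI[OF g bexI[OF _ interval_Mb[OF b]]])
qed

lemma sum_L1: "{..k} = sumset {a. interval_ms k a \<noteq> 0} {..0::nat}"
proof
  show "{..k} \<subseteq> sumset {a. interval_ms k a \<noteq> 0} {..0::nat}"
  proof
    fix a assume "a \<in> {..k}" then show "a \<in> sumset {a. interval_ms k a \<noteq> 0} {..0::nat}"
      by (intro sumsetI[of a _ 0]) (auto simp: interval_ms_def)
  qed
  show "sumset {a. interval_ms k a \<noteq> 0} {..0::nat} \<subseteq> {..k}"
    by (auto elim!: sumsetE simp: interval_ms_def split: if_splits)
qed

lemma sum_L2: assumes "k \<ge> 1" shows "{..k} = sumset {a. interval_ms (k - 1) a \<noteq> 0} {..1::nat}"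
proof
  show "{..k} \<subseteq> sumset {a. interval_ms (k - 1) a \<noteq> 0} {..1::nat}"
  proof
    fix a assume a: "a \<in> {..k}" show "a \<in> sumset {a. interval_ms (k - 1) a \<noteq> 0} {..1::nat}"
    proof (cases "a \<le> k - 1")
      case True then show ?thesis by (intro sumsetI[of a _ 0]) (auto simp: interval_ms_def)
    next
      case False then show ?thesis using a assms
        by (intro sumsetI[of "k - 1" _ 1]) (auto simp: interval_ms_def)
    qed
  qed
  show "sumset {a. interval_ms (k - 1) a \<noteq> 0} {..1::nat} \<subseteq> {..k}"
    using assms by (auto elim!: sumsetE simp: interval_ms_def split: if_splits)
qed

lemma sum_L3:
  assumes "1 \<le> x" "x + 2 \<le> k"
  shows "{..k} = sumset {a. (\<lambda>a. if a \<le> k - 1 \<and> a \<noteq> x then 1 else 0::nat) a \<noteq> 0} {..1::nat}"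
    (is "_ = sumset ?W _")
proof
  show "{..k} \<subseteq> sumset ?W {..1::nat}"
  proof
    fix a assume a: "a \<in> {..k}" show "a \<in> sumset ?W {..1::nat}"
    proof (cases "a = x")
      case True then show ?thesis using assms by (intro sumsetI[of "x - 1" _ 1]) auto
    next
      case ax: False
      show ?thesis
      proof (cases "a = k")
        case True then show ?thesis using assms by (intro sumsetI[of "k - 1" _ 1]) auto
      next
        case False then show ?thesis using a ax by (intro sumsetI[of a _ 0]) auto
      qed
    qed
  qed
  show "sumset ?W {..1::nat} \<subseteq> {..k}"
    using assms by (auto elim!: sumsetE split: if_splits)
qed

lemma phi_on_A: "a \<in> A \<Longrightarrow> phi A g a = g a"
  by (simp add: phi_def)

lemma phi_nz: "phi A g a \<noteq> 0 \<Longrightarrow> \<exists>c. a \<le> c \<and> g c \<noteq> 0"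
  unfolding phi_def by (auto split: if_splits)

theorem mainTheorem20:
  fixes b k :: nat and A :: "nat set" and f :: "nat \<Rightarrow> nat"
  assumes "b \<ge> 1"
    and "A \<noteq> {}" and "Min A = 0" and "\<forall>a\<in>A. a \<le> k"
    and "f \<in> Mb b"
    and "level f 1 = A" and "\<forall>i\<in>{2..b}. level f i = {}"
  shows "num_divisors b f \<le> num_divisors b (interval_ms k)
    \<and> (f \<noteq> interval_ms k \<longrightarrow> num_divisors b f < num_divisors b (interval_ms k))"
proof -
  note b = assms(1)
  have Ak: "A \<subseteq> {..k}" using assms(4) by auto
  have finA: "finite A" using Ak finite_subset by blast
  have A0: "0 \<in> A" using Min_in[OF finA assms(2)] assms(3) by simp
  have f1: "\<And>a. f a \<le> 1"
  proof -
    fix a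
    show "f a \<le> 1"
    proof (cases "b \<ge> 2")
      case True
      then have "level f 2 = {}" using assms(7) by auto
      then have "\<not> 2 \<le> f a" unfolding level_def by blast
      then show ?thesis by simp
    next
      case False
      then have "b = 1" using b by simp
      then show ?thesis using assms(5) unfolding Mb_def by auto
    qed
  qed
  have fA: "\<And>a. f a \<noteq> 0 \<longleftrightarrow> a \<in> A" using assms(6) unfolding level_def by auto
  define D where "D = {g. is_divisor b g f}"
  define Dk where "Dk = {g. is_divisor b g (interval_ms k)}"
  have finDk: "finite Dk" unfolding Dk_def by (rule finite_divk[OF b])
  have l0: "0 \<in> level f 1" using A0 assms(6) by simp
  have suppD: "\<And>g a. g \<in> D \<Longrightarrow> g a \<noteq> 0 \<Longrightarrow> a \<in> A"
    using div_supp[OF _ b l0] assms(6) unfolding D_def by blast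
  have img: "phi A g \<in> Dk" if "g \<in> D" for g
  proof -
    from div_first[OF _ b, of g f] that obtain H where
      "g \<in> Mb b" "level f 1 = sumset {a. g a \<noteq> 0} H" unfolding D_def by blast
    then show ?thesis unfolding Dk_def using phi_div[OF b Ak A0, of g H] assms(6) by simp
  qed
  have inj: "inj_on (phi A) D"
  proof (rule inj_onI)
    fix g1 g2 assume g1: "g1 \<in> D" and g2: "g2 \<in> D" and e: "phi A g1 = phi A g2"
    show "g1 = g2"
    proof
      fix a show "g1 a = g2 a"
      proof (cases "a \<in> A")
        case True
        then show ?thesis using e phi_on_A[OF True, of g1] phi_on_A[OF True, of g2] by metis
      next
        case False
        then have "g1 a = 0" "g2 a = 0" using suppD[OF g1, of a] suppD[OF g2, of a] by blast+
        then show ?thesis by simp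
      qed
    qed
  qed
  have sub: "phi A ` D \<subseteq> Dk" using img by blast
  have le: "card D \<le> card Dk" by (rule card_inj_on_le[OF inj sub finDk])
  have strict: "card D < card Dk" if ne: "f \<noteq> interval_ms k"
  proof -
    obtain x where x: "x \<le> k" "x \<notin> A"
    proof (rule ccontr)
      assume "\<not> thesis"
      then have "\<forall>x. x \<le> k \<longrightarrow> x \<in> A" using that by blast
      have "f = interval_ms k"
      proof
        fix a show "f a = interval_ms k a"
        proof (cases "a \<le> k")
          case True
          then have "f a \<noteq> 0" using fA \<open>\<forall>x. x \<le> k \<longrightarrow> x \<in> A\<close> by blast
          then show ?thesis using f1[of a] True by (simp add: interval_ms_def)
        next
          case False
          then have "a \<notin> A" using Ak by auto
          then have "f a = 0" using fA by blast
          then show ?thesis using False by (simp add: interval_ms_def)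
        qed
      qed
      with ne show False by simp
    qed
    have x1: "x \<ge> 1" using x A0 by (cases x) auto
    have "\<exists>W. W \<in> Dk \<and> W \<notin> phi A ` D"
    proof (cases "k \<in> A")
      case False
      have W: "interval_ms k \<in> Dk" unfolding Dk_def mem_Collect_eq
        by (rule div_k[OF b interval_Mb[OF b] _ sum_L1]) (simp add: interval_ms_def)
      have "interval_ms k \<notin> phi A ` D"
      proof
        assume "interval_ms k \<in> phi A ` D"
        then obtain g where g: "g \<in> D" "interval_ms k = phi A g" by blast
        then have "phi A g k = interval_ms k k" by simp
        then have "phi A g k \<noteq> 0" by (simp add: interval_ms_def)
        then obtain c where "k \<le> c" "g c \<noteq> 0" using phi_nz by blast
        then have "c \<in> A" "k \<le> c" using suppD[OF g(1)] by auto
        then have "c \<le> k" using Ak by auto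
        then have "c = k" using \<open>k \<le> c\<close> by simp
        then show False using False \<open>c \<in> A\<close> by simp
      qed
      then show ?thesis using W by blast
    next
      case kA: True
      have k1: "k \<ge> 1" using x x1 by simp
      show ?thesis
      proof (cases "k - 1 \<in> A")
        case False
        have W: "interval_ms (k - 1) \<in> Dk" unfolding Dk_def mem_Collect_eq
          by (rule div_k[OF b interval_Mb[OF b] _ sum_L2[OF k1]]) (simp add: interval_ms_def)
        have "interval_ms (k - 1) \<notin> phi A ` D"
        proof
          assume "interval_ms (k - 1) \<in> phi A ` D"
          then obtain g where g: "g \<in> D" "interval_ms (k - 1) = phi A g" by blast
          then have "phi A g (k - 1) = interval_ms (k - 1) (k - 1)" by simp
          then have "phi A g (k - 1) \<noteq> 0" by (simp add: interval_ms_def)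
          then obtain c where c: "k - 1 \<le> c" "g c \<noteq> 0" using phi_nz by blast
          then have "c \<in> A" using suppD[OF g(1)] by auto
          then have "c \<le> k" "c \<noteq> k - 1" using Ak False by auto
          then have "c = k" using c(1) by linarith
          then have "phi A g k \<noteq> 0" using phi_on_A[OF kA] c(2) by simp
          moreover have "interval_ms (k - 1) k = 0" using k1 by (simp add: interval_ms_def)
          ultimately show False using g(2) by simp
        qed
        then show ?thesis using W by blast
      next
        case k1A: True
        have "x \<noteq> k" "x \<noteq> k - 1" using x kA k1A by auto
        then have x2: "x + 2 \<le> k" using x(1) by linarith
        define W where "W = (\<lambda>a. if a \<le> k - 1 \<and> a \<noteq> x then 1 else 0::nat)"
        have WM: "W \<in> Mb b"
        proof -
          have "{a. W a \<noteq> 0} \<subseteq> {..k}" unfolding W_def by auto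
          then show ?thesis unfolding Mb_def W_def using b finite_subset[of _ "{..k}"] by auto
        qed
        have eqW: "{..k} = sumset {a. W a \<noteq> 0} {..1}" unfolding W_def using sum_L3[OF x1 x2] by simp
        have WD: "W \<in> Dk" unfolding Dk_def mem_Collect_eq
          by (rule div_k[OF b WM _ eqW]) (simp add: W_def)
        have "W \<notin> phi A ` D"
        proof
          assume "W \<in> phi A ` D"
          then obtain g where g: "g \<in> D" "W = phi A g" by blast
          have "W (k - 1) \<noteq> 0" unfolding W_def using x2 by simp
          then have "g (k - 1) \<noteq> 0" using g(2) phi_on_A[OF k1A] by simp
          moreover have "g x = 0" using suppD[OF g(1)] x(2) by blast
          moreover have "\<exists>c. x \<le> c \<and> g c \<noteq> 0"
            using \<open>g (k - 1) \<noteq> 0\<close> x2 by (intro exI[of _ "k - 1"]) simp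
          ultimately have "phi A g x = 1" unfolding phi_def using x by auto
          moreover have "W x = 0" unfolding W_def by simp
          ultimately show False using g(2) by simp
        qed
        then show ?thesis using WD by blast
      qed
    qed
    then have "phi A ` D \<subset> Dk" using sub by blast
    then have "card (phi A ` D) < card Dk" by (rule psubset_card_mono[OF finDk])
    moreover have "card (phi A ` D) = card D" by (rule card_image[OF inj])
    ultimately show ?thesis by simp
  qed
  show ?thesis using le strict unfolding num_divisors_def D_def Dk_def by blast
qed

end
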